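(* Let $\alpha\in\mathbb R$ and let $(\phi,\psi)$ be a $q\times q$ Stieltjes pair (with respect to $\alpha$). Then there exists a discrete subset $\mathcal D$ of $\mathbb C\setminus[\alpha,\infty)$ such that $\phi$ and $\psi$ are holomorphic in $\mathbb C\setminus([\alpha,\infty)\cup\mathcal D)$ and, for all $w,z\in\mathbb C\setminus([\alpha,\infty)\cup\mathcal D)$, $\mathcal R(\phi(w))=\mathcal R(\phi(z))$, $\mathcal R(\psi(w))=\mathcal R(\psi(z))$, $\psi(w)\mathcal N(\phi(w))=\psi(z)\mathcal N(\phi(z))$, and $\phi(w)\mathcal N(\psi(w))=\phi(z)\mathcal N(\psi(z))$.
   Context: $J_q:=\begin{pmatrix}0&-iI_q\\ iI_q&0\end{pmatrix}$; $\mathcal R$, $\mathcal N$ denote column space and null space. A pair $(\phi,\psi)$ of $q\times q$ matrix-valued functions meromorphic in $\mathbb C\setminus[\alpha,\infty)$ is a $q\times q$ Stieltjes pair if there exists a discrete subset $\mathcal D$ of $\mathbb C\setminus[\alpha,\infty)$ such that: (i) $\phi,\psi$ are holomorphic in $\mathbb C\setminus([\alpha,\infty)\cup\mathcal D)$; (ii) $\operatorname{rank}\begin{pmatrix}\phi(z)\\\psi(z)\end{pmatrix}=q$ for each $z\in\mathbb C\setminus([\alpha,\infty)\cup\mathcal D)$; (iii) for each $z\in\mathbb C\setminus(\mathbb R\cup\mathcal D)$ both $\begin{pmatrix}\phi(z)\\\psi(z)\end{pmatrix}^*\frac{-J_q}{2\operatorname{Im}z}\begin{pmatrix}\phi(z)\\\psi(z)\end{pmatrix}$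 and $\begin{pmatrix}(z-\alpha)\phi(z)\\\psi(z)\end{pmatrix}^*\frac{-J_q}{2\operatorname{Im}z}\begin{pmatrix}(z-\alpha)\phi(z)\\\psi(z)\end{pmatrix}$ are positive semidefinite. *)

theory Defs
  imports "HOL-Analysis.Analysis" "HOL-Complex_Analysis.Complex_Analysis"
begin

text \<open>The domain \<open>\<complex> \ [\<alpha>,\<infinity>)\<close>.\<close>
definition slit_dom :: "real \<Rightarrow> complex set" where
  "slit_dom \<alpha> = - (complex_of_real ` {\<alpha>..})"

text \<open>Conjugate transpose.\<close>
definition adj :: "complex^'n::finite^'m::finite \<Rightarrow> complex^'m^'n" where
  "adj A = (\<chi> i j. cnj (A $ j $ i))"

text \<open>Stacked column block matrix [A; B] with rows indexed by \<open>'m + 'm\<close>.\<close>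
definition stack :: "complex^'n::finite^'m::finite \<Rightarrow> complex^'n^'m \<Rightarrow> complex^'n^('m + 'm)" where
  "stack A B = (\<chi> r. case r of Inl i \<Rightarrow> A $ i | Inr i \<Rightarrow> B $ i)"

text \<open>\<open>J_q = [[0, -i I],[i I, 0]]\<close>.\<close>
definition Jq :: "complex^('q::finite + 'q)^('q + 'q)" where
  "Jq = (\<chi> r s. case (r, s) of
           (Inl i, Inr j) \<Rightarrow> (if i = j then - \<i> else 0)
         | (Inr i, Inl j) \<Rightarrow> (if i = j then \<i> else 0)
         | _ \<Rightarrow> 0)"

text \<open>Positive semidefinite complex matrix: \<open>x* M x\<close> is real and nonnegative for all \<open>x\<close>.\<close>
definition psd :: "complex^'n::finite^'n \<Rightarrow> bool" where
  "psd M \<longleftrightarrow> (\<forall>x. let v = (\<Sum>i\<in>UNIV. cnj (x $ i) * (M *v x) $ i) in Im v = 0 \<and> Re v \<ge> 0)"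

text \<open>Matrix-valued meromorphic / holomorphic: entrywise.\<close>
definition mat_meromorphic_on :: "(complex \<Rightarrow> complex^'n^'m) \<Rightarrow> complex set \<Rightarrow> bool" where
  "mat_meromorphic_on F S \<longleftrightarrow> (\<forall>i j. (\<lambda>z. F z $ i $ j) meromorphic_on S)"

definition mat_holomorphic_on :: "(complex \<Rightarrow> complex^'n^'m) \<Rightarrow> complex set \<Rightarrow> bool" where
  "mat_holomorphic_on F S \<longleftrightarrow> (\<forall>i j. (\<lambda>z. F z $ i $ j) holomorphic_on S)"

text \<open>Discrete subset of an open set \<open>U\<close>: no accumulation point inside \<open>U\<close>.\<close>
definition discrete_subset :: "complex set \<Rightarrow> complex set \<Rightarrow> bool" where
  "discrete_subset D U \<longleftrightarrow> D \<subseteq> U \<and> D sparse_in U"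

text \<open>Scalar multiple of a matrix.\<close>
definition smat :: "complex \<Rightarrow> complex^'n::finite^'m::finite \<Rightarrow> complex^'n^'m" where
  "smat c A = (\<chi> i j. c * A $ i $ j)"

definition stieltjes_pair :: "real \<Rightarrow> (complex \<Rightarrow> complex^'q::finite^'q) \<Rightarrow> (complex \<Rightarrow> complex^'q^'q) \<Rightarrow> bool" where
  "stieltjes_pair \<alpha> \<phi> \<psi> \<longleftrightarrow>
     mat_meromorphic_on \<phi> (slit_dom \<alpha>) \<and> mat_meromorphic_on \<psi> (slit_dom \<alpha>) \<and>
     (\<exists>D. discrete_subset D (slit_dom \<alpha>) \<and>
        mat_holomorphic_on \<phi> (slit_dom \<alpha> - D) \<and> mat_holomorphic_on \<psi> (slit_dom \<alpha> - D) \<and>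
        (\<forall>z \<in> slit_dom \<alpha> - D. rank (stack (\<phi> z) (\<psi> z)) = CARD('q)) \<and>
        (\<forall>z. z \<notin> \<real> \<and> z \<notin> D \<longrightarrow>
           psd (adj (stack (\<phi> z) (\<psi> z)) ** smat (- 1 / (2 * complex_of_real (Im z))) Jq
                  ** stack (\<phi> z) (\<psi> z)) \<and>
           psd (adj (stack (smat (z - complex_of_real \<alpha>) (\<phi> z)) (\<psi> z))
                  ** smat (- 1 / (2 * complex_of_real (Im z))) Jq
                  ** stack (smat (z - complex_of_real \<alpha>) (\<phi> z)) (\<psi> z))))"

end

theory Submission
  imports Defs
begin


lemma rank_full_ker:
  fixes A :: "complex^'n::finite^'m::finite"
  assumes "rank A = CARD('n)" "A *v x = 0" shows "x = 0"
proof -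
  have "vec.span (rows A) = UNIV"
    using assms(1) vec.dim_eq_full[of "rows A"]
    by (simp add: row_rank_def_gen vec.dimension_def card_cart_basis)
  then have "\<exists>B. B ** A = mat 1" using matrix_left_invertible_span_rows_gen by blast
  then show ?thesis using matrix_left_invertible_ker assms(2) by blast
qed

lemma stack_mult_Inl[simp]: "(stack A B *v x) $ Inl i = (A *v x) $ i"
  by (simp add: stack_def matrix_vector_mult_def)
lemma stack_mult_Inr[simp]: "(stack A B *v x) $ Inr i = (B *v x) $ i"
  by (simp add: stack_def matrix_vector_mult_def)

lemma stack_ker:
  fixes A B :: "complex^'n::finite^'m::finite"
  assumes "rank (stack A B) = CARD('n)" "A *v x = 0" "B *v x = 0" shows "x = 0"
proof -
  have "stack A B *v x = 0"
    using assms(2,3) unfolding vec_eq_iff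
    by (metis stack_mult_Inl stack_mult_Inr sum.exhaust zero_index)
  then show ?thesis using rank_full_ker assms(1) by blast
qed


definition cinner :: "complex^'n::finite \<Rightarrow> complex^'n \<Rightarrow> complex" where
  "cinner u w = (\<Sum>i\<in>UNIV. cnj (u$i) * w$i)"

lemma sum_UNIV_plus: "sum f (UNIV :: ('a::finite + 'b::finite) set) = sum (\<lambda>i. f (Inl i)) UNIV + sum (\<lambda>i. f (Inr i)) UNIV"
proof -
  have "sum f (UNIV :: ('a + 'b) set) = sum f (Inl ` UNIV) + sum f (Inr ` UNIV)"
    by (subst UNIV_sum, rule sum.union_disjoint) auto
  also have "\<dots> = sum (\<lambda>i. f (Inl i)) UNIV + sum (\<lambda>i. f (Inr i)) UNIV"
    by (simp add: sum.reindex)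
  finally show ?thesis .
qed

lemma quad_form:
  fixes P :: "complex^'n::finite^'m::finite" and N :: "complex^'m^'m"
  shows "(\<Sum>i\<in>UNIV. cnj (x$i) * ((adj P ** N ** P) *v x)$i) = cinner (P *v x) (N *v (P *v x))"
proof -
  define w where "w = N *v (P *v x)"
  have "(adj P ** N ** P) *v x = adj P *v w"
    by (simp add: w_def matrix_vector_mul_assoc matrix_mul_assoc)
  then have "(\<Sum>i\<in>UNIV. cnj (x$i) * ((adj P ** N ** P) *v x)$i)
      = (\<Sum>i\<in>UNIV. \<Sum>r\<in>UNIV. cnj (x$i) * cnj (P$r$i) * w$r)"
    by (simp add: matrix_vector_mult_def adj_def sum_distrib_left mult.assoc)
  also have "\<dots> = (\<Sum>r\<in>UNIV. \<Sum>i\<in>UNIV. cnj (x$i) * cnj (P$r$i) * w$r)"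
    by (rule sum.swap)
  also have "\<dots> = cinner (P *v x) w"
    by (simp add: cinner_def matrix_vector_mult_def sum_distrib_right sum_distrib_left mult.commute mult.left_commute)
  finally show ?thesis by (simp add: w_def)
qed

lemma Jq_form:
  fixes A B :: "complex^'n::finite^'q::finite"
  shows "cinner (stack A B *v x) (smat c Jq *v (stack A B *v x))
     = c * (- \<i> * cinner (A *v x) (B *v x) + \<i> * cinner (B *v x) (A *v x))"
proof -
  have l: "(smat c Jq *v y) $ Inl i = c * (- \<i>) * y $ Inr i" for y :: "complex^('q+'q)" and i
  proof -
    have "(smat c Jq *v y) $ Inl i = (\<Sum>s\<in>UNIV. c * Jq $ Inl i $ s * y $ s)"
      by (simp add: matrix_vector_mult_def smat_def)
    also have "\<dots> = (\<Sum>j\<in>UNIV. c * (if i = j then - \<i> else 0) * y $ Inr j)"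
      by (simp add: sum_UNIV_plus Jq_def)
    also have "\<dots> = c * (- \<i>) * y $ Inr i"
      by (simp add: if_distrib if_distribR cong: if_cong)
    finally show ?thesis .
  qed
  have r: "(smat c Jq *v y) $ Inr i = c * \<i> * y $ Inl i" for y :: "complex^('q+'q)" and i
  proof -
    have "(smat c Jq *v y) $ Inr i = (\<Sum>s\<in>UNIV. c * Jq $ Inr i $ s * y $ s)"
      by (simp add: matrix_vector_mult_def smat_def)
    also have "\<dots> = (\<Sum>j\<in>UNIV. c * (if i = j then \<i> else 0) * y $ Inl j)"
      by (simp add: sum_UNIV_plus Jq_def)
    also have "\<dots> = c * \<i> * y $ Inl i"
      by (simp add: if_distrib if_distribR cong: if_cong)
    finally show ?thesis .
  qed
  show ?thesis
    by (simp add: cinner_def sum_UNIV_plus l r sum_distrib_left algebra_simps sum.distrib)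
qed

lemma cinner_swap: "cinner v u = cnj (cinner u v)"
  by (simp add: cinner_def mult.commute)

lemma psd_stack_Im:
  fixes A B :: "complex^'n::finite^'q::finite"
  assumes "psd (adj (stack A B) ** smat (complex_of_real r) Jq ** stack A B)"
  shows "0 \<le> r * Im (cinner (A *v x) (B *v x))"
proof -
  from assms have "0 \<le> Re (cinner (stack A B *v x) (smat (complex_of_real r) Jq *v (stack A B *v x)))"
    unfolding psd_def quad_form by (metis)
  also have "\<dots> = 2 * r * Im (cinner (A *v x) (B *v x))"
    unfolding Jq_form cinner_swap[of "B *v x"] by simp
  finally show ?thesis by simp
qed


lemma norm_sq_vec: "(norm (x::complex^'n::finite))^2 = (\<Sum>i\<in>UNIV. (cmod (x$i))^2)"
  unfolding norm_vec_def L2_set_def by (simp add: sum_nonneg)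

lemma cinner_self: "cinner y y = complex_of_real ((norm y)^2)"
  unfolding norm_sq_vec cinner_def of_real_sum
  by (rule sum.cong) (auto simp: complex_norm_square[symmetric] mult.commute)

lemma Re_cinner: "Re (cinner y a) = y \<bullet> a"
  by (simp add: cinner_def inner_vec_def inner_complex_def Re_sum)

lemma cs_eq:
  fixes a y :: "complex^'n::finite"
  assumes "norm a \<le> norm y" "Re (cinner y a) \<ge> (norm y)^2"
  shows "a = y"
proof -
  have "(norm (a - y))^2 = (norm a)^2 - 2 * (y \<bullet> a) + (norm y)^2"
    by (simp add: power2_norm_eq_inner inner_diff_left inner_diff_right inner_commute)
  also have "\<dots> \<le> 0" using assms unfolding Re_cinner
    by (smt (verit, ccfv_SIG) norm_ge_zero power_mono)
  finally have "norm (a - y) = 0" by simp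
  then show ?thesis by simp
qed

lemma norm_smult_vec: "norm (c *s (a::complex^'n::finite)) = cmod c * norm a"
  unfolding norm_vec_def
  by (simp add: L2_set_right_distrib norm_mult)

lemma cinner_smult_right: "cinner y (c *s a) = c * cinner y a"
  by (simp add: cinner_def sum_distrib_left mult.left_commute)

lemma cinner_add_right: "cinner y (a + b) = cinner y a + cinner y b"
  by (simp add: cinner_def sum.distrib distrib_left)

lemma cinner_diff_right: "cinner y (a - b) = cinner y a - cinner y b"
  by (simp add: cinner_def sum_subtractf right_diff_distrib)

lemma cmod_cinner_le: "cmod (cinner y a) \<le> norm y * norm a"
proof (cases "cinner y a = 0")
  case True then show ?thesis by simp
next
  case False
  define s where "s = cinner y a"
  define c where "c = cnj s / complex_of_real (cmod s)"
  have cm: "cmod c = 1" using False by (simp add: c_def s_def norm_divide)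
  have "cinner y (c *s a) = c * s" by (simp add: cinner_smult_right s_def)
  also have "\<dots> = complex_of_real (cmod s)"
    using False by (simp add: c_def s_def field_simps complex_norm_square[symmetric] power2_eq_square[symmetric])
  finally have "cmod s = Re (cinner y (c *s a))" by simp
  also have "\<dots> = y \<bullet> (c *s a)" by (rule Re_cinner)
  also have "\<dots> \<le> norm y * norm (c *s a)" by (rule norm_cauchy_schwarz)
  also have "\<dots> = norm y * norm a" by (simp add: norm_smult_vec cm)
  finally show ?thesis by (simp add: s_def)
qed



lemma mv_comb:
  fixes P Q :: "complex^'n::finite^'m::finite" shows "((\<chi> i j. P$i$j + c * Q$i$j) *v x) = P *v x + c *s (Q *v x)"
  by (simp add: vec_eq_iff matrix_vector_mult_def sum.distrib sum_distrib_left algebra_simps)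

lemma mv_comb_minus:
  fixes P Q :: "complex^'n::finite^'m::finite" shows "((\<chi> i j. P$i$j - c * Q$i$j) *v x) = P *v x - c *s (Q *v x)"
  by (simp add: vec_eq_iff matrix_vector_mult_def sum_distrib_left left_diff_distrib sum_subtractf mult.assoc)

lemma cmod_pm: "(cmod (g + \<i> * f))^2 - (cmod (g - \<i> * f))^2 = 4 * Im (cnj f * g)"
  unfolding cmod_power2 by (simp add: algebra_simps power2_eq_square)

lemma norm_pm:
  fixes f g :: "complex^'n::finite"
  shows "(norm (g + \<i> *s f))^2 - (norm (g - \<i> *s f))^2 = 4 * Im (cinner f g)"
proof -
  have "(norm (g + \<i> *s f))^2 - (norm (g - \<i> *s f))^2
      = (\<Sum>i\<in>UNIV. (cmod (g$i + \<i> * f$i))^2 - (cmod (g$i - \<i> * f$i))^2)"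
    by (simp add: norm_sq_vec sum_subtractf)
  also have "\<dots> = (\<Sum>i\<in>UNIV. 4 * Im (cnj (f$i) * g$i))"
    by (simp only: cmod_pm)
  also have "\<dots> = 4 * Im (cinner f g)"
    by (simp add: cinner_def Im_sum sum_distrib_left)
  finally show ?thesis .
qed

lemma holo_det:
  fixes M :: "complex \<Rightarrow> complex^'n::finite^'n"
  assumes "\<And>i j. (\<lambda>z. M z $ i $ j) holomorphic_on S"
  shows "(\<lambda>z. det (M z)) holomorphic_on S"
  unfolding det_def by (intro holomorphic_intros assms)

lemma holo_mv:
  fixes M :: "complex \<Rightarrow> complex^'n::finite^'m::finite" and v :: "complex \<Rightarrow> complex^'n"
  assumes "\<And>i j. (\<lambda>z. M z $ i $ j) holomorphic_on S" "\<And>j. (\<lambda>z. v z $ j) holomorphic_on S"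
  shows "(\<lambda>z. (M z *v v z) $ i) holomorphic_on S"
  unfolding matrix_vector_mult_def by (simp, intro holomorphic_intros assms)

lemma holo_cinner:
  fixes v :: "complex \<Rightarrow> complex^'n::finite"
  assumes "\<And>j. (\<lambda>z. v z $ j) holomorphic_on S"
  shows "(\<lambda>z. cinner y (v z)) holomorphic_on S"
  unfolding cinner_def by (intro holomorphic_intros assms)

lemma det_nz_of_ker:
  fixes B :: "complex^'n::finite^'n"
  assumes "\<And>x. B *v x = 0 \<Longrightarrow> x = 0"
  shows "det B \<noteq> 0"
proof -
  obtain C where "C ** B = mat 1" using matrix_left_invertible_ker assms by blast
  then have "invertible B" unfolding invertible_def using matrix_left_right_inverse by blast
  then show ?thesis by (simp add: invertible_det_nz)
qed



lemma mv_lin: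
  fixes M :: "complex^'n::finite^'m::finite"
  shows "M *v (x + t *s u) = M *v x + t *s (M *v u)"
  by (simp add: vec_eq_iff matrix_vector_mult_def sum.distrib sum_distrib_left algebra_simps)

lemma mv_smult:
  fixes M :: "complex^'n::finite^'m::finite"
  shows "M *v (t *s u) = t *s (M *v u)"
  by (simp add: vec_eq_iff matrix_vector_mult_def sum_distrib_left algebra_simps)

lemma scaleR_smult: "r *\<^sub>R (v::complex^'n::finite) = complex_of_real r *s v"
proof -
  have "(r *\<^sub>R v) $ i = (complex_of_real r *s v) $ i" for i
    by (simp only: vector_scaleR_component vector_smult_component) (simp add: scaleR_conv_of_real)
  then show ?thesis by (simp add: vec_eq_iff)
qed

lemma subspace_range_mv:
  fixes M :: "complex^'n::finite^'m::finite"
  shows "subspace (range ((*v) M))"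
  unfolding subspace_def
proof (intro conjI ballI allI)
  show "0 \<in> range ((*v) M)" by (metis matrix_vector_mult_0_right rangeI)
  fix x y assume "x \<in> range ((*v) M)" "y \<in> range ((*v) M)"
  then obtain a b where "x = M *v a" "y = M *v b" by auto
  then have "x + y = M *v (a + b)" by (simp add: matrix_vector_right_distrib)
  then show "x + y \<in> range ((*v) M)" by auto
next
  fix c :: real and x assume "x \<in> range ((*v) M)"
  then obtain u where "x = M *v u" by auto
  then have "c *\<^sub>R x = M *v (complex_of_real c *s u)" by (simp add: scaleR_smult mv_smult)
  then show "c *\<^sub>R x \<in> range ((*v) M)" by auto
qed

lemma Im_lin_bound:
  fixes b c :: complex
  assumes "\<And>t. Im (c + t * b) \<le> 0" shows "b = 0"
proof (rule ccontr)
  assume b: "b \<noteq> 0"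
  define t where "t = \<i> * cnj b * complex_of_real ((\<bar>Im c\<bar> + 1) / (cmod b)^2)"
  have "t * b = \<i> * (cnj b * b) * complex_of_real ((\<bar>Im c\<bar> + 1) / (cmod b)^2)"
    by (simp add: t_def mult_ac)
  also have "cnj b * b = complex_of_real ((cmod b)^2)"
    by (simp add: complex_norm_square[symmetric] mult.commute)
  finally have "t * b = \<i> * complex_of_real (\<bar>Im c\<bar> + 1)"
    using b by (simp flip: of_real_mult)
  then have "Im (c + t * b) = Im c + \<bar>Im c\<bar> + 1" by simp
  with assms[of t] show False by linarith
qed



lemma core:
  fixes F G :: "complex \<Rightarrow> complex^'q::finite^'q" and V :: "complex set"
  assumes V: "open V" "connected V"
    and hF: "\<And>i j. (\<lambda>z. F z $ i $ j) holomorphic_on V"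
    and hG: "\<And>i j. (\<lambda>z. G z $ i $ j) holomorphic_on V"
    and ker: "\<And>z x. z \<in> V \<Longrightarrow> F z *v x = 0 \<Longrightarrow> G z *v x = 0 \<Longrightarrow> x = 0"
    and pos: "\<And>z x. z \<in> V \<Longrightarrow> Im (cinner (F z *v x) (G z *v x)) \<le> 0"
    and w: "w \<in> V" and z: "z \<in> V"
  shows "range ((*v) (F w)) = range ((*v) (F z)) \<and>
         (*v) (G w) ` {x. F w *v x = 0} = (*v) (G z) ` {x. F z *v x = 0}"
proof -
  define A where "A \<zeta> = (\<chi> i j. G \<zeta> $ i $ j + \<i> * F \<zeta> $ i $ j)" for \<zeta>
  define B where "B \<zeta> = (\<chi> i j. G \<zeta> $ i $ j - \<i> * F \<zeta> $ i $ j)" for \<zeta>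
  define K where "K \<zeta> = (*v) (G \<zeta>) ` {x. F \<zeta> *v x = 0}" for \<zeta>
  have Am: "A \<zeta> *v x = G \<zeta> *v x + \<i> *s (F \<zeta> *v x)" for \<zeta> x
    unfolding A_def by (rule mv_comb)
  have Bm: "B \<zeta> *v x = G \<zeta> *v x - \<i> *s (F \<zeta> *v x)" for \<zeta> x
    unfolding B_def by (rule mv_comb_minus)
  have Amc: "(A \<zeta> *v x) $ k = (G \<zeta> *v x) $ k + \<i> * (F \<zeta> *v x) $ k" for \<zeta> x k
    by (simp add: Am)
  have Bmc: "(B \<zeta> *v x) $ k = (G \<zeta> *v x) $ k - \<i> * (F \<zeta> *v x) $ k" for \<zeta> x k
    by (simp add: Bm)
  have nAB: "norm (A \<zeta> *v x) \<le> norm (B \<zeta> *v x)" if "\<zeta> \<in> V" for \<zeta> x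
  proof -
    have "(norm (A \<zeta> *v x))^2 - (norm (B \<zeta> *v x))^2 \<le> 0"
      unfolding Am Bm norm_pm using pos[OF that, of x] by simp
    then show ?thesis using power2_le_imp_le[of "norm (A \<zeta> *v x)" "norm (B \<zeta> *v x)"] by simp
  qed
  have AB_eq: "(A \<zeta> *v u = y \<and> B \<zeta> *v u = y) \<longleftrightarrow> (F \<zeta> *v u = 0 \<and> G \<zeta> *v u = y)" for \<zeta> u y
  proof
    assume h: "A \<zeta> *v u = y \<and> B \<zeta> *v u = y"
    have "(F \<zeta> *v u) $ k = 0 \<and> (G \<zeta> *v u) $ k = y $ k" for k
    proof -
      have "(G \<zeta> *v u) $ k + \<i> * (F \<zeta> *v u) $ k = y $ k"
           "(G \<zeta> *v u) $ k - \<i> * (F \<zeta> *v u) $ k = y $ k"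
        using h Amc[of \<zeta> u k] Bmc[of \<zeta> u k] by auto
      then have "(G \<zeta> *v u) $ k + \<i> * (F \<zeta> *v u) $ k - ((G \<zeta> *v u) $ k - \<i> * (F \<zeta> *v u) $ k) = 0"
        by simp
      then have "2 * \<i> * (F \<zeta> *v u) $ k = 0" by (simp add: algebra_simps)
      then have "(F \<zeta> *v u) $ k = 0" by simp
      with \<open>(G \<zeta> *v u) $ k + \<i> * (F \<zeta> *v u) $ k = y $ k\<close> show ?thesis by simp
    qed
    then show "F \<zeta> *v u = 0 \<and> G \<zeta> *v u = y" by (simp add: vec_eq_iff)
  next
    assume "F \<zeta> *v u = 0 \<and> G \<zeta> *v u = y"
    then show "A \<zeta> *v u = y \<and> B \<zeta> *v u = y" by (simp add: Am Bm)
  qed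
  have KA: "y \<in> K \<zeta> \<longleftrightarrow> (\<exists>u. A \<zeta> *v u = y \<and> B \<zeta> *v u = y)" for \<zeta> y
    unfolding AB_eq K_def by auto
  have detB: "det (B \<zeta>) \<noteq> 0" if "\<zeta> \<in> V" for \<zeta>
  proof (rule det_nz_of_ker)
    fix x assume Bx: "B \<zeta> *v x = 0"
    then have "norm (A \<zeta> *v x) \<le> 0" using nAB[OF that, of x] by simp
    then have "A \<zeta> *v x = 0" by simp
    with Bx have "F \<zeta> *v x = 0 \<and> G \<zeta> *v x = 0" using AB_eq by blast
    then show "x = 0" using ker[OF that] by blast
  qed
  have hB: "(\<lambda>\<zeta>. B \<zeta> $ i $ j) holomorphic_on V" for i j
    unfolding B_def by (simp, intro holomorphic_intros hF hG)
  have hA: "(\<lambda>\<zeta>. A \<zeta> $ i $ j) holomorphic_on V" for i j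
    unfolding A_def by (simp, intro holomorphic_intros hF hG)
  have MP: "\<exists>v. A z1 *v v = y \<and> B z1 *v v = y"
    if z0: "z0 \<in> V" and z1: "z1 \<in> V" and u: "A z0 *v u = y" "B z0 *v u = y" for z0 z1 y u
  proof -
    define v where "v \<zeta> = (\<chi> k. det(\<chi> i j. if j=k then y$i else B \<zeta>$i$j) / det (B \<zeta>))" for \<zeta>
    have Bv: "B \<zeta> *v v \<zeta> = y" if "\<zeta> \<in> V" for \<zeta>
    proof -
      have "B \<zeta> *v v \<zeta> = y \<longleftrightarrow> v \<zeta> = v \<zeta>"
        unfolding v_def by (rule cramer[OF detB[OF that]])
      then show ?thesis by blast
    qed
    have v0: "v z0 = u"
    proof -
      have "B z0 *v u = y \<longleftrightarrow> u = v z0"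
        unfolding v_def by (rule cramer[OF detB[OF z0]])
      then show ?thesis using u(2) by simp
    qed
    have hv: "(\<lambda>\<zeta>. v \<zeta> $ k) holomorphic_on V" for k
    proof -
      have e: "(\<lambda>\<zeta>. (\<chi> i j. if j=k then y$i else B \<zeta>$i$j) $ i $ j) holomorphic_on V" for i j
        by (cases "j = k") (simp_all add: hB)
      show ?thesis unfolding v_def
        by (simp, intro holomorphic_on_divide holo_det e hB) (use detB in auto)
    qed
    define h where "h \<zeta> = cinner y (A \<zeta> *v v \<zeta>)" for \<zeta>
    have hh: "h holomorphic_on V"
      unfolding h_def by (intro holo_cinner holo_mv hA hv)
    have bound: "cmod (h \<zeta>) \<le> (norm y)^2" if "\<zeta> \<in> V" for \<zeta>
    proof -
      have "cmod (h \<zeta>) \<le> norm y * norm (A \<zeta> *v v \<zeta>)" unfolding h_def by (rule cmod_cinner_le)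
      also have "\<dots> \<le> norm y * norm (B \<zeta> *v v \<zeta>)" by (intro mult_left_mono nAB that) simp
      also have "\<dots> = (norm y)^2" using Bv[OF that] by (simp add: power2_eq_square)
      finally show ?thesis .
    qed
    have h0: "h z0 = complex_of_real ((norm y)^2)"
      unfolding h_def v0 u(1) by (rule cinner_self)
    have "h constant_on V"
      by (rule maximum_modulus_principle[OF hh V(1) V(2) V(1) subset_refl z0])
         (use bound h0 in \<open>auto simp: norm_power\<close>)
    then have "h z1 = h z0" using z0 z1 unfolding constant_on_def by metis
    then have "Re (cinner y (A z1 *v v z1)) = (norm y)^2" using h0 unfolding h_def by simp
    moreover have "norm (A z1 *v v z1) \<le> norm y" using nAB[OF z1, of "v z1"] Bv[OF z1] by simp
    ultimately have "A z1 *v v z1 = y" using cs_eq by (metis order_refl)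
    then show ?thesis using Bv[OF z1] by blast
  qed
  have "y \<in> K w \<longleftrightarrow> y \<in> K z" for y
    unfolding KA using MP[OF w z] MP[OF z w] by blast
  then have Kc: "K w = K z" by blast
  have orth: "(range ((*v) (F \<zeta>)))\<^sup>\<bottom> = K \<zeta>" if zV: "\<zeta> \<in> V" for \<zeta>
  proof
    show "K \<zeta> \<subseteq> (range ((*v) (F \<zeta>)))\<^sup>\<bottom>"
    proof
      fix y assume "y \<in> K \<zeta>"
      then obtain u where u: "F \<zeta> *v u = 0" "y = G \<zeta> *v u" unfolding K_def by auto
      show "y \<in> (range ((*v) (F \<zeta>)))\<^sup>\<bottom>"
        unfolding orthogonal_comp_def orthogonal_def
      proof (clarify)
        fix x
        have "cinner (F \<zeta> *v x) (G \<zeta> *v u) = 0"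
        proof (rule Im_lin_bound)
          fix t
          have "Im (cinner (F \<zeta> *v (x + t *s u)) (G \<zeta> *v (x + t *s u))) \<le> 0" by (rule pos[OF zV])
          then show "Im (cinner (F \<zeta> *v x) (G \<zeta> *v x) + t * cinner (F \<zeta> *v x) (G \<zeta> *v u)) \<le> 0"
            by (simp add: mv_lin u(1) cinner_add_right cinner_smult_right)
        qed
        then show "(F \<zeta> *v x) \<bullet> y = 0" using Re_cinner[of "F \<zeta> *v x" y] u(2) by simp
      qed
    qed
  next
    show "(range ((*v) (F \<zeta>)))\<^sup>\<bottom> \<subseteq> K \<zeta>"
    proof
      fix y assume "y \<in> (range ((*v) (F \<zeta>)))\<^sup>\<bottom>"
      then have o: "(F \<zeta> *v x) \<bullet> y = 0" for x unfolding orthogonal_comp_def orthogonal_def by auto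
      have c0: "cinner y (F \<zeta> *v x) = 0" for x
      proof -
        have r: "Re (cinner y (F \<zeta> *v x')) = 0" for x'
          using o[of x'] by (simp add: Re_cinner inner_commute)
        have "Re (cinner y (F \<zeta> *v (\<i> *s x))) = - Im (cinner y (F \<zeta> *v x))"
          by (simp add: mv_smult cinner_smult_right)
        then have "Im (cinner y (F \<zeta> *v x)) = 0" using r by simp
        with r[of x] show ?thesis by (simp add: complex_eq_iff)
      qed
      obtain u where Bu: "B \<zeta> *v u = y" using cramer[OF detB[OF zV]] by blast
      have "A \<zeta> *v u = B \<zeta> *v u + (2 * \<i>) *s (F \<zeta> *v u)"
        by (simp add: vec_eq_iff Amc Bmc algebra_simps)
      then have "cinner y (A \<zeta> *v u) = cinner y y"
        using Bu c0 by (simp add: cinner_add_right cinner_smult_right)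
      then have "Re (cinner y (A \<zeta> *v u)) = (norm y)^2" by (simp add: cinner_self)
      moreover have "norm (A \<zeta> *v u) \<le> norm y" using nAB[OF zV, of u] Bu by simp
      ultimately have "A \<zeta> *v u = y" using cs_eq by (metis order_refl)
      then show "y \<in> K \<zeta>" using KA Bu by blast
    qed
  qed
  have "range ((*v) (F w)) = (K w)\<^sup>\<bottom>"
    using orth[OF w] orthogonal_comp_self[OF subspace_range_mv] by metis
  moreover have "range ((*v) (F z)) = (K z)\<^sup>\<bottom>"
    using orth[OF z] orthogonal_comp_self[OF subspace_range_mv] by metis
  ultimately show ?thesis using Kc unfolding K_def by simp
qed



lemma slit_dom_iff: "z \<in> slit_dom \<alpha> \<longleftrightarrow> Im z \<noteq> 0 \<or> Re z < \<alpha>"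
proof -
  have "z \<in> complex_of_real ` {\<alpha>..} \<longleftrightarrow> Im z = 0 \<and> \<alpha> \<le> Re z"
  proof
    assume "z \<in> complex_of_real ` {\<alpha>..}" then show "Im z = 0 \<and> \<alpha> \<le> Re z" by auto
  next
    assume h: "Im z = 0 \<and> \<alpha> \<le> Re z"
    then have "z = complex_of_real (Re z)" by (simp add: complex_eq_iff)
    with h show "z \<in> complex_of_real ` {\<alpha>..}" by auto
  qed
  then show ?thesis unfolding slit_dom_def by auto
qed

lemma open_slit: "open (slit_dom \<alpha>)"
proof -
  have "slit_dom \<alpha> = {z. Im z \<noteq> 0} \<union> {z. Re z < \<alpha>}" by (auto simp: slit_dom_iff)
  moreover have "open {z. Im z \<noteq> 0}"
    by (rule open_Collect_neq) (intro continuous_intros)+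
  moreover have "open {z. Re z < \<alpha>}" by (rule open_halfspace_Re_lt)
  ultimately show ?thesis by auto
qed

lemma sq_in_slit:
  assumes "0 < Im \<zeta>" shows "complex_of_real \<alpha> + \<zeta>^2 \<in> slit_dom \<alpha>"
proof (cases "Re \<zeta> = 0")
  case True
  have "Re (complex_of_real \<alpha> + \<zeta>^2) = \<alpha> - (Im \<zeta>)^2" using True by (simp add: power2_eq_square)
  moreover have "0 < (Im \<zeta>)^2" using assms by simp
  ultimately show ?thesis unfolding slit_dom_iff by linarith
next
  case False
  have "Im (complex_of_real \<alpha> + \<zeta>^2) = 2 * Re \<zeta> * Im \<zeta>" by (simp add: power2_eq_square)
  then show ?thesis unfolding slit_dom_iff using False assms by simp
qed

lemma sqrt_pre:
  assumes "w \<in> slit_dom \<alpha>"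
  shows "\<exists>\<zeta>. 0 < Im \<zeta> \<and> complex_of_real \<alpha> + \<zeta>^2 = w"
proof -
  define u where "u = complex_of_real \<alpha> - w"
  define \<zeta> where "\<zeta> = \<i> * csqrt u"
  have eq: "complex_of_real \<alpha> + \<zeta>^2 = w"
    by (simp add: \<zeta>_def u_def power_mult_distrib)
  have "0 < Re (csqrt u)"
  proof (rule ccontr)
    define sq where "sq = csqrt u"
    assume "\<not> 0 < Re (csqrt u)"
    then have r: "Re sq = 0" using csqrt_principal[of u] unfolding sq_def[symmetric] by auto
    have "u = sq^2" unfolding sq_def by simp
    then have "Im u = 0" "Re u \<le> 0" using r by (simp_all add: power2_eq_square)
    then have "Im w = 0" "\<alpha> \<le> Re w" by (simp_all add: u_def)
    with assms show False by (simp add: slit_dom_iff)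
  qed
  then have "0 < Im \<zeta>" by (simp add: \<zeta>_def)
  with eq show ?thesis by blast
qed

lemma smat_mv: "smat c M *v x = c *s (M *v x)"
  by (simp add: vec_eq_iff smat_def matrix_vector_mult_def sum_distrib_left mult.assoc)

lemma smat_mv': "smat c (M::complex^'n::finite^'m::finite) *v x = M *v (c *s x)"
  by (simp add: smat_mv mv_smult)

lemma cinner_smult_left: "cinner (c *s a) b = cnj c * cinner a b"
  by (simp add: cinner_def sum_distrib_left mult.assoc)

lemma num_ineq:
  fixes \<zeta> a :: complex
  assumes s: "0 < Im \<zeta>" and p: "Re \<zeta> \<noteq> 0"
    and h1: "0 \<le> -1 / (2 * Im (\<zeta>^2)) * Im a"
    and h2: "0 \<le> -1 / (2 * Im (\<zeta>^2)) * Im (cnj (\<zeta>^2) * a)"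
  shows "Im (cnj \<zeta> * a) \<le> 0"
proof -
  define P where "P = Re \<zeta>"
  define S where "S = Im \<zeta>"
  define c where "c = Re a"
  define d where "d = Im a"
  have i1: "Im (\<zeta>^2) = 2 * P * S" by (simp add: P_def S_def power2_eq_square)
  have i2: "Im (cnj (\<zeta>^2) * a) = (P^2 - S^2) * d - 2 * P * S * c"
    by (simp add: P_def S_def c_def d_def power2_eq_square algebra_simps)
  have i3: "Im (cnj \<zeta> * a) = P * d - S * c" by (simp add: P_def S_def c_def d_def)
  have S0: "0 < S" using s by (simp add: S_def)
  have key: "2 * P * (P * d - S * c) = ((P^2 - S^2) * d - 2 * P * S * c) + (P^2 + S^2) * d"
    by (simp add: algebra_simps power2_eq_square)
  show ?thesis unfolding i3
  proof (cases "P > 0")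
    case True
    then have q: "0 < 2 * P * S" using S0 by simp
    then have neg: "-1 / (2 * P * S) < 0" by simp
    from h1 have "0 \<le> (-1 / (2 * P * S)) * d" unfolding i1 d_def[symmetric] by simp
    with neg have "d \<le> 0" by (meson mult_neg_pos not_le)
    moreover from h2 have "0 \<le> (-1 / (2 * P * S)) * ((P^2 - S^2) * d - 2 * P * S * c)"
      unfolding i1 i2 by simp
    with neg have "(P^2 - S^2) * d - 2 * P * S * c \<le> 0" by (meson mult_neg_pos not_le)
    moreover have "0 \<le> P^2 + S^2" by simp
    ultimately have "2 * P * (P * d - S * c) \<le> 0" unfolding key
      using mult_nonneg_nonpos[of "P^2 + S^2" d] by linarith
    then show "P * d - S * c \<le> 0" using True by (simp add: mult_le_0_iff)
  next
    case False
    then have P: "P < 0" using p by (simp add: P_def)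
    then have q: "2 * P * S < 0" using S0 by (simp add: mult_neg_pos)
    then have pos: "0 < -1 / (2 * P * S)" by (simp add: divide_neg_neg)
    from h1 have "0 \<le> (-1 / (2 * P * S)) * d" unfolding i1 d_def[symmetric] by simp
    with pos have "0 \<le> d" by (meson mult_pos_neg not_le)
    moreover from h2 have "0 \<le> (-1 / (2 * P * S)) * ((P^2 - S^2) * d - 2 * P * S * c)"
      unfolding i1 i2 by simp
    with pos have "0 \<le> (P^2 - S^2) * d - 2 * P * S * c" by (meson mult_pos_neg not_le)
    moreover have "0 \<le> P^2 + S^2" by simp
    ultimately have "0 \<le> 2 * P * (P * d - S * c)" unfolding key
      using mult_nonneg_nonneg[of "P^2 + S^2" d] by linarith
    then show "P * d - S * c \<le> 0" using P by (simp add: zero_le_mult_iff)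
  qed
qed




lemma range_smat:
  fixes M :: "complex^'n::finite^'m::finite"
  assumes "c \<noteq> 0" shows "range ((*v) (smat c M)) = range ((*v) M)"
proof
  show "range ((*v) (smat c M)) \<subseteq> range ((*v) M)" by (auto simp: smat_mv')
  show "range ((*v) M) \<subseteq> range ((*v) (smat c M))"
  proof
    fix y assume "y \<in> range ((*v) M)"
    then obtain x where "y = M *v x" by auto
    then have "y = smat c M *v (inverse c *s x)" using assms by (simp add: smat_mv' vector_smult_assoc)
    then show "y \<in> range ((*v) (smat c M))" by auto
  qed
qed

lemma ker_smat:
  fixes M :: "complex^'n::finite^'m::finite"
  assumes "c \<noteq> 0" shows "{x. smat c M *v x = 0} = {x. M *v x = 0}"
  using assms by (auto simp: smat_mv vec_eq_iff)

lemma img_smat: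
  fixes M :: "complex^'n::finite^'m::finite" and N :: "complex^'n^'k::finite"
  assumes "c \<noteq> 0" shows "(*v) (smat c M) ` {x. N *v x = 0} = (*v) M ` {x. N *v x = 0}"
proof
  show "(*v) (smat c M) ` {x. N *v x = 0} \<subseteq> (*v) M ` {x. N *v x = 0}"
  proof
    fix y assume "y \<in> (*v) (smat c M) ` {x. N *v x = 0}"
    then obtain x where x: "N *v x = 0" "y = M *v (c *s x)" by (auto simp: smat_mv')
    then have "N *v (c *s x) = 0" by (simp add: mv_smult)
    with x show "y \<in> (*v) M ` {x. N *v x = 0}" by auto
  qed
  show "(*v) M ` {x. N *v x = 0} \<subseteq> (*v) (smat c M) ` {x. N *v x = 0}"
  proof
    fix y assume "y \<in> (*v) M ` {x. N *v x = 0}"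
    then obtain x where x: "N *v x = 0" "y = M *v x" by auto
    then have "y = smat c M *v (inverse c *s x)" using assms by (simp add: smat_mv' vector_smult_assoc)
    moreover have "N *v (inverse c *s x) = 0" using x by (simp add: mv_smult)
    ultimately show "y \<in> (*v) (smat c M) ` {x. N *v x = 0}" by auto
  qed
qed

lemma limit_ineq:
  fixes f :: "complex \<Rightarrow> real"
  assumes V: "open V" and f: "continuous_on V f" and z0: "z0 \<in> V"
    and h: "\<And>\<zeta>. \<zeta> \<in> V \<Longrightarrow> Re \<zeta> \<noteq> 0 \<Longrightarrow> f \<zeta> \<le> 0"
  shows "f z0 \<le> 0"
proof (cases "Re z0 = 0")
  case False then show ?thesis using h z0 by blast
next
  case True
  define X where "X n = z0 + complex_of_real (inverse (real (Suc n)))" for n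
  have "(\<lambda>n. complex_of_real (inverse (real (Suc n)))) \<longlonglongrightarrow> complex_of_real 0"
    by (intro tendsto_of_real LIMSEQ_inverse_real_of_nat)
  then have X: "X \<longlonglongrightarrow> z0" unfolding X_def using tendsto_add[of "\<lambda>_. z0" z0 sequentially] by force
  have "isCont f z0" using continuous_on_eq_continuous_at[OF V] f z0 by blast
  then have fX: "(\<lambda>n. f (X n)) \<longlonglongrightarrow> f z0" using X isCont_tendsto_compose by blast
  have "eventually (\<lambda>n. X n \<in> V) sequentially" using topological_tendstoD[OF X V z0] .
  then have "eventually (\<lambda>n. f (X n) \<le> 0) sequentially"
  proof (rule eventually_mono)
    fix n assume "X n \<in> V"
    moreover have "Re (X n) \<noteq> 0" using True by (simp add: X_def)
    ultimately show "f (X n) \<le> 0" using h by blast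
  qed
  then show ?thesis using tendsto_upperbound[OF fX] by simp
qed



lemma cont_mv:
  fixes M :: "complex \<Rightarrow> complex^'n::finite^'m::finite"
  assumes "\<And>i j. continuous_on S (\<lambda>z. M z $ i $ j)"
  shows "continuous_on S (\<lambda>z. (M z *v x) $ i)"
  unfolding matrix_vector_mult_def vec_lambda_beta
  by (intro continuous_on_sum continuous_on_mult assms continuous_on_const)

lemma cont_cinner:
  fixes a b :: "complex \<Rightarrow> complex^'n::finite"
  assumes "\<And>i. continuous_on S (\<lambda>z. a z $ i)" "\<And>i. continuous_on S (\<lambda>z. b z $ i)"
  shows "continuous_on S (\<lambda>z. Im (cinner (a z) (b z)))"
  unfolding cinner_def
  by (intro continuous_on_Im continuous_on_sum continuous_on_mult continuous_on_cnj assms)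

theorem proposition10p15:
  fixes \<alpha> :: real and \<phi> \<psi> :: "complex \<Rightarrow> complex^'q^'q"
  assumes "stieltjes_pair \<alpha> \<phi> \<psi>"
  shows "\<exists>D. discrete_subset D (slit_dom \<alpha>) \<and>
           mat_holomorphic_on \<phi> (slit_dom \<alpha> - D) \<and> mat_holomorphic_on \<psi> (slit_dom \<alpha> - D) \<and>
           (\<forall>w \<in> slit_dom \<alpha> - D. \<forall>z \<in> slit_dom \<alpha> - D.
              range ((*v) (\<phi> w)) = range ((*v) (\<phi> z)) \<and>
              range ((*v) (\<psi> w)) = range ((*v) (\<psi> z)) \<and>
              (*v) (\<psi> w) ` {x. \<phi> w *v x = 0} = (*v) (\<psi> z) ` {x. \<phi> z *v x = 0} \<and>
              (*v) (\<phi> w) ` {x. \<psi> w *v x = 0} = (*v) (\<phi> z) ` {x. \<psi> z *v x = 0})"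
proof -
  from assms obtain D where
    disc: "discrete_subset D (slit_dom \<alpha>)" and
    hphi: "mat_holomorphic_on \<phi> (slit_dom \<alpha> - D)" and
    hpsi: "mat_holomorphic_on \<psi> (slit_dom \<alpha> - D)" and
    rk: "\<forall>z \<in> slit_dom \<alpha> - D. rank (stack (\<phi> z) (\<psi> z)) = CARD('q)" and
    ps: "\<forall>z. z \<notin> \<real> \<and> z \<notin> D \<longrightarrow>
           psd (adj (stack (\<phi> z) (\<psi> z)) ** smat (- 1 / (2 * complex_of_real (Im z))) Jq
                  ** stack (\<phi> z) (\<psi> z)) \<and>
           psd (adj (stack (smat (z - complex_of_real \<alpha>) (\<phi> z)) (\<psi> z))
                  ** smat (- 1 / (2 * complex_of_real (Im z))) Jq
                  ** stack (smat (z - complex_of_real \<alpha>) (\<phi> z)) (\<psi> z))"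
    unfolding stieltjes_pair_def by blast
  define g where "g \<zeta> = complex_of_real \<alpha> + \<zeta>^2" for \<zeta>
  define H where "H = {\<zeta>. 0 < Im \<zeta>}"
  define V where "V = {\<zeta>. 0 < Im \<zeta> \<and> g \<zeta> \<in> slit_dom \<alpha> - D}"
  define F where "F \<zeta> = smat \<zeta> (\<phi> (g \<zeta>))" for \<zeta>
  define G where "G \<zeta> = \<psi> (g \<zeta>)" for \<zeta>
  define G2 where "G2 \<zeta> = smat (- \<zeta>) (\<phi> (g \<zeta>))" for \<zeta>
  have Dsub: "D \<subseteq> slit_dom \<alpha>" and Dsp: "D sparse_in slit_dom \<alpha>"
    using disc unfolding discrete_subset_def by auto
  have oSD: "open (slit_dom \<alpha> - D)" by (rule open_diff_sparse_pts[OF open_slit Dsp])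
  have Vopen: "open V"
  proof -
    have "V = H \<inter> g -` (slit_dom \<alpha> - D)" by (auto simp: V_def H_def)
    moreover have "open (g -` (slit_dom \<alpha> - D))"
      by (rule continuous_open_vimage[OF oSD]) (auto simp: g_def[abs_def] intro!: continuous_intros)
    ultimately show ?thesis by (simp add: H_def open_Int open_halfspace_Im_gt)
  qed
  have Vconn: "connected V"
  proof -
    have "countable D" using sparse_imp_countable[OF open_slit Dsp] Dsub by (simp add: Int_absorb1)
    have "g -` D \<subseteq> (\<lambda>d. csqrt (d - complex_of_real \<alpha>)) ` D \<union> (\<lambda>d. - csqrt (d - complex_of_real \<alpha>)) ` D"
    proof
      fix \<zeta> assume "\<zeta> \<in> g -` D"
      then have d: "g \<zeta> \<in> D" by simp
      have "\<zeta>^2 = (csqrt (g \<zeta> - complex_of_real \<alpha>))^2" by (simp add: g_def)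
      then have "\<zeta> = csqrt (g \<zeta> - complex_of_real \<alpha>) \<or> \<zeta> = - csqrt (g \<zeta> - complex_of_real \<alpha>)"
        using power2_eq_iff by blast
      with d show "\<zeta> \<in> (\<lambda>d. csqrt (d - complex_of_real \<alpha>)) ` D \<union> (\<lambda>d. - csqrt (d - complex_of_real \<alpha>)) ` D"
        by blast
    qed
    then have cnt: "countable (g -` D)"
      using \<open>countable D\<close> by (meson countable_Un countable_image countable_subset)
    have "V = H - g -` D" using sq_in_slit by (auto simp: V_def H_def g_def)
    moreover have "connected (H - g -` D)"
      by (rule connected_open_diff_countable)
         (simp_all add: H_def open_halfspace_Im_gt convex_connected convex_halfspace_Im_gt cnt)
    ultimately show ?thesis by simp
  qed
  have VS: "g \<zeta> \<in> slit_dom \<alpha> - D" "0 < Im \<zeta>" "\<zeta> \<noteq> 0" if "\<zeta> \<in> V" for \<zeta>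
    using that by (auto simp: V_def)
  have hphi': "(\<lambda>\<zeta>. \<phi> (g \<zeta>) $ i $ j) holomorphic_on V" for i j
  proof -
    have "((\<lambda>z. \<phi> z $ i $ j) \<circ> g) holomorphic_on V"
      by (rule holomorphic_on_compose_gen[of g V _ "slit_dom \<alpha> - D"])
         (use hphi VS in \<open>auto simp: mat_holomorphic_on_def g_def[abs_def] intro!: holomorphic_intros\<close>)
    then show ?thesis by (simp add: o_def)
  qed
  have hpsi': "(\<lambda>\<zeta>. \<psi> (g \<zeta>) $ i $ j) holomorphic_on V" for i j
  proof -
    have "((\<lambda>z. \<psi> z $ i $ j) \<circ> g) holomorphic_on V"
      by (rule holomorphic_on_compose_gen[of g V _ "slit_dom \<alpha> - D"])
         (use hpsi VS in \<open>auto simp: mat_holomorphic_on_def g_def[abs_def] intro!: holomorphic_intros\<close>)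
    then show ?thesis by (simp add: o_def)
  qed
  have hF: "(\<lambda>\<zeta>. F \<zeta> $ i $ j) holomorphic_on V" for i j
    unfolding F_def smat_def by (simp, intro holomorphic_intros hphi')
  have hG: "(\<lambda>\<zeta>. G \<zeta> $ i $ j) holomorphic_on V" for i j
    unfolding G_def by (rule hpsi')
  have hG2: "(\<lambda>\<zeta>. G2 \<zeta> $ i $ j) holomorphic_on V" for i j
    unfolding G2_def smat_def by (simp, intro holomorphic_intros hphi')
  have kerphi: "x = 0" if "\<zeta> \<in> V" "\<phi> (g \<zeta>) *v x = 0" "\<psi> (g \<zeta>) *v x = 0" for \<zeta> x
    using stack_ker[OF _ that(2,3)] rk VS(1)[OF that(1)] by blast
  have kerF: "x = 0" if "\<zeta> \<in> V" "F \<zeta> *v x = 0" "G \<zeta> *v x = 0" for \<zeta> x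
  proof -
    have "\<phi> (g \<zeta>) *v x = 0" using that(2) VS(3)[OF that(1)] unfolding F_def by (simp add: smat_mv vec_eq_iff)
    then show ?thesis using kerphi that unfolding G_def by blast
  qed
  have kerG: "x = 0" if "\<zeta> \<in> V" "G \<zeta> *v x = 0" "G2 \<zeta> *v x = 0" for \<zeta> x
  proof -
    have "- \<zeta> \<noteq> 0" using VS(3)[OF that(1)] by simp
    then have "\<phi> (g \<zeta>) *v x = 0" using that(3) unfolding G2_def by (simp add: smat_mv vec_eq_iff)
    then show ?thesis using kerphi that unfolding G_def by blast
  qed
  have cinF: "cinner (F \<zeta> *v x) (G \<zeta> *v x) = cnj \<zeta> * cinner (\<phi> (g \<zeta>) *v x) (\<psi> (g \<zeta>) *v x)" for \<zeta> x
    by (simp add: F_def G_def smat_mv cinner_smult_left)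
  have cinG: "Im (cinner (G \<zeta> *v x) (G2 \<zeta> *v x)) = Im (cinner (F \<zeta> *v x) (G \<zeta> *v x))" for \<zeta> x
  proof -
    have "cinner (G \<zeta> *v x) (G2 \<zeta> *v x) = (- \<zeta>) * cnj (cinner (\<phi> (g \<zeta>) *v x) (\<psi> (g \<zeta>) *v x))"
      by (simp only: G_def G2_def smat_mv cinner_smult_right cinner_swap[of "\<psi> (g \<zeta>) *v x"])
    then show ?thesis unfolding cinF by simp
  qed
  have posRe: "Im (cinner (F \<zeta> *v x) (G \<zeta> *v x)) \<le> 0" if V: "\<zeta> \<in> V" and Re: "Re \<zeta> \<noteq> 0" for \<zeta> x
  proof -
    define z where "z = g \<zeta>"
    define a where "a = cinner (\<phi> z *v x) (\<psi> z *v x)"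
    have Imz: "Im z = Im (\<zeta>^2)" by (simp add: z_def g_def)
    have "Im (\<zeta>^2) \<noteq> 0" using Re VS(2)[OF V] by (simp add: power2_eq_square)
    then have "z \<notin> \<real>" by (simp add: complex_is_Real_iff Imz)
    moreover have "z \<notin> D" using VS(1)[OF V] by (simp add: z_def)
    ultimately have p: "psd (adj (stack (\<phi> z) (\<psi> z)) ** smat (complex_of_real (- 1 / (2 * Im z))) Jq
                  ** stack (\<phi> z) (\<psi> z))"
          "psd (adj (stack (smat (z - complex_of_real \<alpha>) (\<phi> z)) (\<psi> z))
                  ** smat (complex_of_real (- 1 / (2 * Im z))) Jq
                  ** stack (smat (z - complex_of_real \<alpha>) (\<phi> z)) (\<psi> z))"
      using ps by auto
    have h1: "0 \<le> -1 / (2 * Im (\<zeta>^2)) * Im a"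
      using psd_stack_Im[OF p(1), of x] by (simp add: a_def Imz)
    have zz: "z - complex_of_real \<alpha> = \<zeta>^2" by (simp add: z_def g_def)
    have h2: "0 \<le> -1 / (2 * Im (\<zeta>^2)) * Im (cnj (\<zeta>^2) * a)"
      using psd_stack_Im[OF p(2), of x] by (simp add: a_def Imz zz smat_mv cinner_smult_left)
    have "Im (cnj \<zeta> * a) \<le> 0" by (rule num_ineq[OF VS(2)[OF V] Re h1 h2])
    then show ?thesis unfolding cinF by (simp add: a_def z_def)
  qed
  have pos: "Im (cinner (F \<zeta> *v x) (G \<zeta> *v x)) \<le> 0" if V: "\<zeta> \<in> V" for \<zeta> x
  proof -
    have c: "continuous_on V (\<lambda>\<zeta>. Im (cinner (F \<zeta> *v x) (G \<zeta> *v x)))"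
      by (intro cont_cinner cont_mv holomorphic_on_imp_continuous_on hF hG)
    show ?thesis by (rule limit_ineq[OF Vopen c V]) (rule posRe)
  qed
  have pos2: "Im (cinner (G \<zeta> *v x) (G2 \<zeta> *v x)) \<le> 0" if V: "\<zeta> \<in> V" for \<zeta> x
    unfolding cinG by (rule pos[OF V])
  have main: "\<forall>w \<in> slit_dom \<alpha> - D. \<forall>z \<in> slit_dom \<alpha> - D.
              range ((*v) (\<phi> w)) = range ((*v) (\<phi> z)) \<and>
              range ((*v) (\<psi> w)) = range ((*v) (\<psi> z)) \<and>
              (*v) (\<psi> w) ` {x. \<phi> w *v x = 0} = (*v) (\<psi> z) ` {x. \<phi> z *v x = 0} \<and>
              (*v) (\<phi> w) ` {x. \<psi> w *v x = 0} = (*v) (\<phi> z) ` {x. \<psi> z *v x = 0}"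
  proof (intro ballI)
    fix w z assume w: "w \<in> slit_dom \<alpha> - D" and z: "z \<in> slit_dom \<alpha> - D"
    obtain \<zeta>w where \<zeta>w: "0 < Im \<zeta>w" "g \<zeta>w = w" using sqrt_pre[of w \<alpha>] w unfolding g_def by auto
    obtain \<zeta>z where \<zeta>z: "0 < Im \<zeta>z" "g \<zeta>z = z" using sqrt_pre[of z \<alpha>] z unfolding g_def by auto
    have wV: "\<zeta>w \<in> V" and zV: "\<zeta>z \<in> V" using \<zeta>w \<zeta>z w z by (auto simp: V_def)
    have nw: "\<zeta>w \<noteq> 0" "- \<zeta>w \<noteq> 0" and nz: "\<zeta>z \<noteq> 0" "- \<zeta>z \<noteq> 0" using VS(3) wV zV by auto
    have c1: "range ((*v) (F \<zeta>w)) = range ((*v) (F \<zeta>z)) \<and>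
         (*v) (G \<zeta>w) ` {x. F \<zeta>w *v x = 0} = (*v) (G \<zeta>z) ` {x. F \<zeta>z *v x = 0}"
      by (rule core[OF Vopen Vconn hF hG kerF pos wV zV])
    have c2: "range ((*v) (G \<zeta>w)) = range ((*v) (G \<zeta>z)) \<and>
         (*v) (G2 \<zeta>w) ` {x. G \<zeta>w *v x = 0} = (*v) (G2 \<zeta>z) ` {x. G \<zeta>z *v x = 0}"
      by (rule core[OF Vopen Vconn hG hG2 kerG pos2 wV zV])
    show "range ((*v) (\<phi> w)) = range ((*v) (\<phi> z)) \<and>
              range ((*v) (\<psi> w)) = range ((*v) (\<psi> z)) \<and>
              (*v) (\<psi> w) ` {x. \<phi> w *v x = 0} = (*v) (\<psi> z) ` {x. \<phi> z *v x = 0} \<and>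
              (*v) (\<phi> w) ` {x. \<psi> w *v x = 0} = (*v) (\<phi> z) ` {x. \<psi> z *v x = 0}"
      using c1 c2 unfolding F_def G_def G2_def \<zeta>w(2) \<zeta>z(2)
        range_smat[OF nw(1)] range_smat[OF nz(1)] ker_smat[OF nw(1)] ker_smat[OF nz(1)]
        img_smat[OF nw(2)] img_smat[OF nz(2)]
      apply (elim conjE)
      apply (intro conjI)
         apply assumption+
      done
  qed
  show ?thesis using disc hphi hpsi main by blast
qed


end
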